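(* Let $P$ be a finite set of points and $\mathcal{R}$ a finite family of axis-aligned squares in the plane, let $k\ge1$ and $1\le\alpha\le k$ be integers, and let $m^*$ be the optimal number of points of $P$ exposable by deleting $k$ squares. Then the algorithm Greedy-Squares computes a set of at most $\alpha k$ squares whose deletion exposes at least $\alpha m^*/k$ points.
   Context: A point is exposed with respect to a family of squares if it lies in none of them. For $p\in P$ let $\mathcal{R}(p)$ be the set of squares containing $p$, and let $\mathcal{A}(p)$ be a smallest square in $\mathcal{R}(p)$ (ties broken by a fixed rule); for $R\in\mathcal{R}$ let $\mathcal{P}_R=\mathcal{A}^{-1}(R)$. Algorithm Greedy-Squares: (1) for every $R\in\mathcal{R}$, compute exactly a maximum subset $P(R,k)\subseteq\mathcal{P}_R$ of points that can be exposed by deleting $k$ squares of $\mathcal{R}$, together with such a set of $k$ squares; (2) order the squares by decreasing $|P(R,k)|$ and let $\mathcal{S}$ be the first $\alpha$ of them; (3) delete the union of the corresponding deletion sets for $R\in\mathcal{S}$ and return $\bigcup_{R\in\mathcal{S}}P(R,k)$ as the set of exposed points. *)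

theory Defs
  imports Complex_Main
begin

text \<open>Points of the plane are pairs of reals.  An axis-aligned (closed) square is
  encoded by a triple (x, y, s): lower-left corner (x, y) and side length s > 0.\<close>

type_synonym point = "real \<times> real"
type_synonym square = "real \<times> real \<times> real"

definition side :: "square \<Rightarrow> real" where
  "side R = snd (snd R)"

definition valid_square :: "square \<Rightarrow> bool" where
  "valid_square R \<longleftrightarrow> side R > 0"

definition in_square :: "point \<Rightarrow> square \<Rightarrow> bool" where
  "in_square p R \<longleftrightarrow> fst R \<le> fst p \<and> fst p \<le> fst R + side R
                    \<and> fst (snd R) \<le> snd p \<and> snd p \<le> fst (snd R) + side R"

definition exposed :: "square set \<Rightarrow> point \<Rightarrow> bool" where
  "exposed Q p \<longleftrightarrow> (\<forall>R\<in>Q. \<not> in_square p R)"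

definition exposed_after :: "square set \<Rightarrow> square set \<Rightarrow> point set \<Rightarrow> point set" where
  "exposed_after \<R> D X = {p \<in> X. exposed (\<R> - D) p}"

definition containing :: "square set \<Rightarrow> point \<Rightarrow> square set" where
  "containing \<R> p = {R \<in> \<R>. in_square p R}"

definition opt_exposed :: "point set \<Rightarrow> square set \<Rightarrow> nat \<Rightarrow> nat" where
  "opt_exposed P \<R> k = Max {card (exposed_after \<R> D P) | D. D \<subseteq> \<R> \<and> card D \<le> k}"

text \<open>A valid run of Greedy-Squares, given the choices made by the algorithm:
  A = the smallest-square assignment (any tie breaking), PRk R = P(R,k),
  Del R = the deletion set realising P(R,k), S = the selected squares.\<close>
definition greedy_squares_run ::
  "point set \<Rightarrow> square set \<Rightarrow> nat \<Rightarrow> nat \<Rightarrow> (point \<Rightarrow> square)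
   \<Rightarrow> (square \<Rightarrow> point set) \<Rightarrow> (square \<Rightarrow> square set) \<Rightarrow> square set \<Rightarrow> bool" where
  "greedy_squares_run P \<R> k \<alpha> A PRk Del S \<longleftrightarrow>
     (\<forall>p\<in>P. containing \<R> p \<noteq> {} \<longrightarrow>
        A p \<in> containing \<R> p \<and> (\<forall>R\<in>containing \<R> p. side (A p) \<le> side R))
   \<and> (\<forall>R\<in>\<R>.
        let PR = {p \<in> P. containing \<R> p \<noteq> {} \<and> A p = R} in
        Del R \<subseteq> \<R> \<and> card (Del R) \<le> k \<and>
        PRk R = exposed_after \<R> (Del R) PR \<and>
        (\<forall>D. D \<subseteq> \<R> \<and> card D \<le> k \<longrightarrow> card (exposed_after \<R> D PR) \<le> card (PRk R)))
   \<and> S \<subseteq> \<R> \<and> card S = min \<alpha> (card \<R>)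
   \<and> (\<forall>R\<in>S. \<forall>R'\<in>\<R> - S. card (PRk R') \<le> card (PRk R))"

end

theory Submission
  imports Defs
begin

lemma arith_core:
  fixes a b c j m t k \<alpha> :: nat
  assumes "a \<ge> j*t" "b \<ge> (\<alpha>-j)*t" "c \<le> m*t" "j+m \<le> k" "j \<le> \<alpha>" "\<alpha> \<le> k"
  shows "\<alpha>*(a+c) \<le> k*(a+b)"
proof -
  obtain d where kd: "k = \<alpha> + d" using assms(6) le_Suc_ex by blast
  obtain e where ae: "\<alpha> = j + e" using assms(5) le_Suc_ex by blast
  obtain a' where aa: "a = j*t + a'" using assms(1) le_Suc_ex by blast
  have b: "b \<ge> e*t" using assms(2) ae by simp
  have c: "c \<le> (e+d)*t" using assms(3,4) kd ae proof - have "m \<le> e+d" using assms(4) kd ae by simp then show ?thesis using assms(3) by (meson le_trans mult_le_mono1) qed 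
  have "\<alpha>*(a+c) \<le> \<alpha>*(a+(e+d)*t)" using c by simp
  also have "\<dots> \<le> k*(a+e*t)" unfolding kd ae aa by (simp add: algebra_simps add_mult_distrib2)
  also have "\<dots> \<le> k*(a+b)" using b by simp
  finally show ?thesis .
qed

lemma topk:
  fixes f :: "'a \<Rightarrow> nat"
  assumes fin: "finite Rs" and SR: "S \<subseteq> Rs" and cS: "card S = min \<alpha> (card Rs)"
    and top: "\<forall>s\<in>S. \<forall>y\<in>Rs-S. f y \<le> f s"
    and TR: "T \<subseteq> Rs" and cT: "card T \<le> k" and ak: "\<alpha> \<le> k"
  shows "\<alpha> * sum f T \<le> k * sum f S"
proof (cases "T \<subseteq> S")
  case True
  then have "sum f T \<le> sum f S" using fin SR by (meson finite_subset sum_mono2 zero_le)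
  then show ?thesis using ak by (simp add: mult_le_mono)
next
  case False
  then obtain y where y: "y \<in> T" "y \<notin> S" by blast
  have finS: "finite S" using fin SR finite_subset by blast
  have finT: "finite T" using fin TR finite_subset by blast
  have "S \<noteq> Rs" using y TR by blast
  then have "card S < card Rs" using fin SR by (meson psubsetI psubset_card_mono)
  then have cSa: "card S = \<alpha>" using cS by linarith
  show ?thesis
  proof (cases "S = {}")
    case True
    then show ?thesis using cSa by simp
  next
    case Sne: False
    define t where "t = Min (f ` S)"
    have tle: "\<And>s. s \<in> S \<Longrightarrow> t \<le> f s" unfolding t_def using finS by simp
    have tge: "\<And>z. z \<in> Rs - S \<Longrightarrow> f z \<le> t"
    proof -
      fix z assume z: "z \<in> Rs - S"
      have "t \<in> f ` S" unfolding t_def using finS Sne by simp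
      then show "f z \<le> t" using top z by auto
    qed
    define j where "j = card (T \<inter> S)"
    define m where "m = card (T - S)"
    have a: "sum f (T \<inter> S) \<ge> j * t" unfolding j_def
      using sum_bounded_below[of "T \<inter> S" t f] tle by auto
    have cST: "card (S - T) = \<alpha> - j" unfolding j_def using cSa finS
      by (metis Int_commute card_Diff_subset_Int finite_Int)
    have b: "sum f (S - T) \<ge> (\<alpha> - j) * t"
      using sum_bounded_below[of "S - T" t f] tle cST by auto
    have c: "sum f (T - S) \<le> m * t" unfolding m_def
      using sum_bounded_above[of "T - S" f t] tge TR by auto
    have jm: "j + m = card T" unfolding j_def m_def using finT
      by (metis card_Int_Diff)
    have ja: "j \<le> \<alpha>" unfolding j_def using cSa card_mono[OF finS, of "T \<inter> S"] by auto
    have eT: "sum f T = sum f (T \<inter> S) + sum f (T - S)" using finT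
      by (metis sum.Int_Diff)
    have eS: "sum f S = sum f (T \<inter> S) + sum f (S - T)" using finS
      by (metis Int_commute sum.Int_Diff)
    show ?thesis unfolding eT eS
      by (rule arith_core[OF a b c _ ja ak]) (use jm cT in simp)
  qed
qed

theorem mainTheorem15:
  fixes P :: "point set" and \<R> :: "square set" and k \<alpha> :: nat
    and A :: "point \<Rightarrow> square" and PRk :: "square \<Rightarrow> point set"
    and Del :: "square \<Rightarrow> square set" and S :: "square set"
  assumes "finite P" and "finite \<R>" and "\<forall>R\<in>\<R>. valid_square R"
    and "k \<ge> 1" and "1 \<le> \<alpha>" and "\<alpha> \<le> k"
    and "greedy_squares_run P \<R> k \<alpha> A PRk Del S"
  shows "(\<Union>R\<in>S. Del R) \<subseteq> \<R>
       \<and> card (\<Union>R\<in>S. Del R) \<le> \<alpha> * k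
       \<and> (\<Union>R\<in>S. PRk R) \<subseteq> exposed_after \<R> (\<Union>R\<in>S. Del R) P
       \<and> real (card (exposed_after \<R> (\<Union>R\<in>S. Del R) P))
           \<ge> real \<alpha> * real (opt_exposed P \<R> k) / real k"

proof -
  let ?C = "containing \<R>"
  let ?PR = "\<lambda>R. {p \<in> P. ?C p \<noteq> {} \<and> A p = R}"
  let ?U = "\<Union>R\<in>S. Del R"
  let ?P0 = "{p \<in> P. ?C p = {}}"
  let ?f = "\<lambda>R. card (PRk R)"
  note run = assms(7)[unfolded greedy_squares_run_def]
  have r1: "\<forall>p\<in>P. ?C p \<noteq> {} \<longrightarrow> A p \<in> ?C p \<and> (\<forall>R\<in>?C p. side (A p) \<le> side R)"
    using run by (rule conjunct1)
  note rest = run[THEN conjunct2]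
  note r2 = rest[THEN conjunct1]
  note rest2 = rest[THEN conjunct2]
  have SR: "S \<subseteq> \<R>" using rest2 by (rule conjunct1)
  have cS: "card S = min \<alpha> (card \<R>)" using rest2[THEN conjunct2] by (rule conjunct1)
  have top: "\<forall>R\<in>S. \<forall>R'\<in>\<R> - S. ?f R' \<le> ?f R" using rest2[THEN conjunct2] by (rule conjunct2)
  have Ap: "\<And>p. p \<in> P \<Longrightarrow> ?C p \<noteq> {} \<Longrightarrow> A p \<in> ?C p" using r1 by blast
  have DelR: "Del R \<subseteq> \<R> \<and> card (Del R) \<le> k \<and>
        PRk R = exposed_after \<R> (Del R) (?PR R) \<and>
        (\<forall>D. D \<subseteq> \<R> \<and> card D \<le> k \<longrightarrow> card (exposed_after \<R> D (?PR R)) \<le> card (PRk R))"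
    if h: "R \<in> \<R>" for R
    using bspec[OF r2 h] unfolding Let_def .
  have finS: "finite S" using SR assms(2) finite_subset by blast
  have G1: "?U \<subseteq> \<R>" using DelR SR by blast
  have "card ?U \<le> (\<Sum>R\<in>S. card (Del R))" by (rule card_UN_le[OF finS])
  also have "\<dots> \<le> (\<Sum>R\<in>S. k)" by (rule sum_mono) (use DelR SR in blast)
  also have "\<dots> = card S * k" by simp
  also have "\<dots> \<le> \<alpha> * k" using cS by simp
  finally have G2: "card ?U \<le> \<alpha> * k" .
  have G3: "(\<Union>R\<in>S. PRk R) \<subseteq> exposed_after \<R> ?U P"
  proof
    fix p assume "p \<in> (\<Union>R\<in>S. PRk R)"
    then obtain R where R: "R \<in> S" "p \<in> PRk R" by blast
    then have "p \<in> exposed_after \<R> (Del R) (?PR R)" using DelR SR by blast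
    then show "p \<in> exposed_after \<R> ?U P" using R(1)
      unfolding exposed_after_def exposed_def by blast
  qed
  have P0e: "?P0 \<subseteq> exposed_after \<R> ?U P"
    unfolding exposed_after_def exposed_def containing_def by auto
  have PRkPR: "\<And>R. R \<in> \<R> \<Longrightarrow> PRk R \<subseteq> ?PR R"
    using DelR unfolding exposed_after_def by blast
  have finP0: "finite ?P0" using assms(1) by simp
  have finPRk: "\<And>R. R \<in> \<R> \<Longrightarrow> finite (PRk R)"
  proof -
    fix R assume "R \<in> \<R>"
    then have "PRk R \<subseteq> P" using PRkPR by blast
    then show "finite (PRk R)" using assms(1) finite_subset by blast
  qed
  have cardU: "card (\<Union>R\<in>S. PRk R) = (\<Sum>R\<in>S. ?f R)"
  proof (rule card_UN_disjoint[OF finS])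
    show "\<forall>i\<in>S. finite (PRk i)" using finPRk SR by blast
    show "\<forall>i\<in>S. \<forall>j\<in>S. i \<noteq> j \<longrightarrow> PRk i \<inter> PRk j = {}"
      using PRkPR SR by blast
  qed
  have disj: "?P0 \<inter> (\<Union>R\<in>S. PRk R) = {}" using PRkPR SR by blast
  have finE: "finite (exposed_after \<R> ?U P)" using assms(1) unfolding exposed_after_def by simp
  have "card ?P0 + (\<Sum>R\<in>S. ?f R) = card (?P0 \<union> (\<Union>R\<in>S. PRk R))"
  proof -
    have "finite (\<Union>R\<in>S. PRk R)" using finS finPRk SR by blast
    then show ?thesis using card_Un_disjoint[OF finP0 _ disj] cardU by simp
  qed
  also have "\<dots> \<le> card (exposed_after \<R> ?U P)"
    using P0e G3 finE by (simp add: card_mono)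
  finally have Glow: "card ?P0 + (\<Sum>R\<in>S. ?f R) \<le> card (exposed_after \<R> ?U P)" .
  let ?M = "{card (exposed_after \<R> D P) | D. D \<subseteq> \<R> \<and> card D \<le> k}"
  have "?M = (\<lambda>D. card (exposed_after \<R> D P)) ` {D. D \<subseteq> \<R> \<and> card D \<le> k}" by blast
  then have finM: "finite ?M" using assms(2) by simp
  have "card (exposed_after \<R> {} P) \<in> ?M" by auto
  then have "?M \<noteq> {}" by blast
  then have "opt_exposed P \<R> k \<in> ?M" unfolding opt_exposed_def using finM Max_in by blast
  then obtain D where D: "D \<subseteq> \<R>" "card D \<le> k" "opt_exposed P \<R> k = card (exposed_after \<R> D P)"
    by blast
  have finD: "finite D" using D(1) assms(2) finite_subset by blast
  have cover: "exposed_after \<R> D P \<subseteq> ?P0 \<union> (\<Union>R\<in>D. exposed_after \<R> D (?PR R))"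
  proof
    fix p assume p: "p \<in> exposed_after \<R> D P"
    show "p \<in> ?P0 \<union> (\<Union>R\<in>D. exposed_after \<R> D (?PR R))"
    proof (cases "?C p = {}")
      case True then show ?thesis using p unfolding exposed_after_def by blast
    next
      case False
      have pP: "p \<in> P" using p unfolding exposed_after_def by blast
      have "A p \<in> ?C p" using Ap[OF pP False] .
      then have "A p \<in> D" using p unfolding exposed_after_def exposed_def containing_def by blast
      then show ?thesis using p pP False unfolding exposed_after_def by blast
    qed
  qed
  have "opt_exposed P \<R> k \<le> card (?P0 \<union> (\<Union>R\<in>D. exposed_after \<R> D (?PR R)))"
    unfolding D(3) by (rule card_mono) (use assms(1) cover finD in \<open>auto simp: exposed_after_def\<close>)
  also have "\<dots> \<le> card ?P0 + card (\<Union>R\<in>D. exposed_after \<R> D (?PR R))" by (rule card_Un_le)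
  also have "\<dots> \<le> card ?P0 + (\<Sum>R\<in>D. card (exposed_after \<R> D (?PR R)))"
    using card_UN_le[OF finD] by simp
  also have "\<dots> \<le> card ?P0 + (\<Sum>R\<in>D. ?f R)"
  proof -
    have "(\<Sum>R\<in>D. card (exposed_after \<R> D (?PR R))) \<le> (\<Sum>R\<in>D. ?f R)"
    proof (rule sum_mono)
      fix R assume "R \<in> D"
      then have "R \<in> \<R>" using D(1) by blast
      then show "card (exposed_after \<R> D (?PR R)) \<le> ?f R" using DelR D(1,2) by blast
    qed
    then show ?thesis by simp
  qed
  finally have Oup: "opt_exposed P \<R> k \<le> card ?P0 + (\<Sum>R\<in>D. ?f R)" .
  have tk: "\<alpha> * (\<Sum>R\<in>D. ?f R) \<le> k * (\<Sum>R\<in>S. ?f R)"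
    by (rule topk[OF assms(2) SR cS top D(1) D(2) assms(6)])
  have "\<alpha> * opt_exposed P \<R> k \<le> \<alpha> * (card ?P0 + (\<Sum>R\<in>D. ?f R))"
    using Oup by (rule mult_le_mono2)
  also have "\<dots> = \<alpha> * card ?P0 + \<alpha> * (\<Sum>R\<in>D. ?f R)" by (rule add_mult_distrib2)
  also have "\<dots> \<le> k * card ?P0 + k * (\<Sum>R\<in>S. ?f R)"
    using tk assms(6) by (intro add_le_mono mult_le_mono1)
  also have "\<dots> = k * (card ?P0 + (\<Sum>R\<in>S. ?f R))" by (rule add_mult_distrib2[symmetric])
  also have "\<dots> \<le> k * card (exposed_after \<R> ?U P)"
    using Glow by (rule mult_le_mono2)
  finally have "real \<alpha> * real (opt_exposed P \<R> k) \<le> real k * real (card (exposed_after \<R> ?U P))"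
    by (simp only: of_nat_mult[symmetric] of_nat_le_iff)
  then have G4: "real \<alpha> * real (opt_exposed P \<R> k) / real k \<le> real (card (exposed_after \<R> ?U P))"
    using assms(4) by (simp add: divide_le_eq mult.commute)
  show ?thesis by (intro conjI G1 G2 G3 G4)
qed

end
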